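(* Let $K\in\{\mathbb R,\mathbb C,\mathbb H\}$ and let $(E,d)$ be a metric vector space over $K$. Then $d$ is asymptotically isometric to (the distance $\|x-y\|$ of) a norm $\|\cdot\|$ on $E$ if and only if the following three conditions hold: (1) $d$ is asymptotically multiplicative; (2) $d$ is unbounded on every non-trivial linear subspace of $E$; (3) for every $C_1>1$ there exists $C_0\ge0$ such that for every $n\ge2$ and all $x_1,\dots,x_n,y_1,\dots,y_n\in E$, $$d\Big(\sum_{i=1}^n x_i,\sum_{i=1}^n y_i\Big)\le C_1\sum_{i=1}^n d(x_i,y_i)+nC_0.$$ In that case a norm with this property is given by $\|x\|=\lim_{n\to+\infty}\frac1n\int_{\mathbb U}d(nux,0)\,d\mu(u)$.
   Context: $K$ is $\mathbb R$, $\mathbb C$ or $\mathbb H$ with the usual absolute value. A metric vector space $(E,d)$ is a topological vector space over $K$ whose topology is generated by the metric $d$. $\mathbb U=\{u\in K:|u|=1\}$ and $\mu$ is the right-invariant Haar probability measure on $\mathbb U$. A distance $d$ is asymptotically isometric to a distance $\delta$ if for every $C_1>1$ there is $C_2\ge0$ with $C_1^{-1}\delta(x,y)-C_2\le d(x,y)\le C_1\delta(x,y)+C_2$ for all $x,y$. The distance $d$ is asymptotically multiplicative if for every $C_1>1$ there exist $C_2\ge0$, $C_3\ge0$ such that for all $\lambda\in K$ and $x,y\in E$: $C_1^{-1}|\lambda|d(x,y)-C_2|\lambda|-C_3\le d(\lambda x,\lambda y)\le C_1|\lambda|d(x,y)+C_2|\lambda|+C_3$. $d$ is unbounded on a subspace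 $V$ if $\sup_{x,y\in V}d(x,y)=\infty$. *)

theory Defs
  imports "HOL-Analysis.Analysis" "HOL-Probability.Probability"
begin

text \<open>Scalars: a type 'k of class real_normed_div_algebra (associative real division
algebra with multiplicative norm) that is finite-dimensional (euclidean_space).
Up to isometric isomorphism these are exactly R, C, H with the usual absolute value.\<close>

definition left_module :: "('k::real_normed_div_algebra \<Rightarrow> 'e::ab_group_add \<Rightarrow> 'e) \<Rightarrow> bool" where
  "left_module smul \<longleftrightarrow>
     (\<forall>a x y. smul a (x + y) = smul a x + smul a y) \<and>
     (\<forall>a b x. smul (a + b) x = smul a x + smul b x) \<and>
     (\<forall>a b x. smul (a * b) x = smul a (smul b x)) \<and>
     (\<forall>x. smul 1 x = x)"

definition metric_vector_space ::
  "('k::{real_normed_div_algebra,euclidean_space} \<Rightarrow> 'e::ab_group_add \<Rightarrow> 'e) \<Rightarrow> ('e \<Rightarrow> 'e \<Rightarrow> real) \<Rightarrow> bool" where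
  "metric_vector_space smul d \<longleftrightarrow>
     left_module smul \<and>
     Metric_space UNIV d \<and> (\<forall>x y. d x y = 0 \<longrightarrow> x = y) \<and>
     continuous_map (prod_topology (Metric_space.mtopology UNIV d) (Metric_space.mtopology UNIV d))
        (Metric_space.mtopology UNIV d) (\<lambda>(x, y). x + y) \<and>
     continuous_map (prod_topology (euclidean :: 'k topology) (Metric_space.mtopology UNIV d))
        (Metric_space.mtopology UNIV d) (\<lambda>(a, x). smul a x)"

definition is_norm :: "('k::real_normed_div_algebra \<Rightarrow> 'e::ab_group_add \<Rightarrow> 'e) \<Rightarrow> ('e \<Rightarrow> real) \<Rightarrow> bool" where
  "is_norm smul N \<longleftrightarrow>
     (\<forall>x. N x \<ge> 0) \<and> (\<forall>x. N x = 0 \<longleftrightarrow> x = 0) \<and>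
     (\<forall>a x. N (smul a x) = norm a * N x) \<and>
     (\<forall>x y. N (x + y) \<le> N x + N y)"

definition asymp_isometric :: "('e \<Rightarrow> 'e \<Rightarrow> real) \<Rightarrow> ('e \<Rightarrow> 'e \<Rightarrow> real) \<Rightarrow> bool" where
  "asymp_isometric d \<delta> \<longleftrightarrow>
     (\<forall>C1>1. \<exists>C2\<ge>0. \<forall>x y. \<delta> x y / C1 - C2 \<le> d x y \<and> d x y \<le> C1 * \<delta> x y + C2)"

definition asymp_multiplicative ::
  "('k::real_normed_div_algebra \<Rightarrow> 'e \<Rightarrow> 'e) \<Rightarrow> ('e \<Rightarrow> 'e \<Rightarrow> real) \<Rightarrow> bool" where
  "asymp_multiplicative smul d \<longleftrightarrow>
     (\<forall>C1>1. \<exists>C2\<ge>0. \<exists>C3\<ge>0. \<forall>(c::'k) x y.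
        norm c * d x y / C1 - C2 * norm c - C3 \<le> d (smul c x) (smul c y) \<and>
        d (smul c x) (smul c y) \<le> C1 * norm c * d x y + C2 * norm c + C3)"

definition linear_subspace :: "('k::real_normed_div_algebra \<Rightarrow> 'e::ab_group_add \<Rightarrow> 'e) \<Rightarrow> 'e set \<Rightarrow> bool" where
  "linear_subspace smul V \<longleftrightarrow> 0 \<in> V \<and> (\<forall>x\<in>V. \<forall>y\<in>V. x + y \<in> V) \<and> (\<forall>a. \<forall>x\<in>V. smul a x \<in> V)"

definition unbounded_on :: "('e \<Rightarrow> 'e \<Rightarrow> real) \<Rightarrow> 'e set \<Rightarrow> bool" where
  "unbounded_on d V \<longleftrightarrow> (\<forall>B. \<exists>x\<in>V. \<exists>y\<in>V. d x y > B)"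

definition unit_sphere :: "'k::real_normed_div_algebra set" where
  "unit_sphere = {u. norm u = 1}"

definition right_haar_U :: "'k::{real_normed_div_algebra,euclidean_space} measure \<Rightarrow> bool" where
  "right_haar_U \<mu> \<longleftrightarrow>
     prob_space \<mu> \<and> sets \<mu> = sets (restrict_space borel unit_sphere) \<and>
     (\<forall>u\<in>unit_sphere. distr \<mu> \<mu> (\<lambda>v. v * u) = \<mu>)"

end

theory Submission
  imports Defs
begin

context
  fixes smul :: "'k::{real_normed_div_algebra,euclidean_space} \<Rightarrow> 'e::ab_group_add \<Rightarrow> 'e"
  assumes LM: "left_module smul"
begin

lemma lm_add_r: "smul a (x + y) = smul a x + smul a y"
  using LM unfolding left_module_def by blast
lemma lm_add_l: "smul (a + b) x = smul a x + smul b x"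
  using LM unfolding left_module_def by blast
lemma lm_mult: "smul (a * b) x = smul a (smul b x)"
  using LM unfolding left_module_def by blast
lemma lm_one: "smul 1 x = x"
  using LM unfolding left_module_def by blast
lemma lm_zero_r: "smul a 0 = 0"
  using lm_add_r[of a 0 0] by simp
lemma lm_zero_l: "smul 0 x = 0"
  using lm_add_l[of 0 0 x] by simp
lemma lm_minus_r: "smul a (- x) = - smul a x"
  using lm_add_r[of a x "-x"] lm_zero_r[of a] by (simp add: minus_unique)
lemma lm_minus_l: "smul (- a) x = - smul a x"
  using lm_add_l[of a "-a" x] lm_zero_l[of x] by (simp add: minus_unique)
lemma lm_diff_r: "smul a (x - y) = smul a x - smul a y"
  using lm_add_r[of a x "-y"] lm_minus_r by simp
lemma lm_diff_l: "smul (a - b) x = smul a x - smul b x"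
  using lm_add_l[of a "-b" x] lm_minus_l by simp
lemma lm_nat_sum: "smul (of_nat n) x = (\<Sum>i<n. x)"
proof (induction n)
  case 0 then show ?case by (simp add: lm_zero_l)
next
  case (Suc n) then show ?case by (simp add: lm_add_l lm_one add.commute)
qed
lemma lm_nat_nat: "smul (of_nat n) (smul (of_nat m) x) = smul (of_nat (n*m)) x"
  by (simp add: lm_mult[symmetric])
lemma lm_comm_nat: "smul a (smul (of_nat n) x) = smul (of_nat n) (smul a x)"
  by (simp add: lm_mult[symmetric] mult_of_nat_commute)
end

definition bseq :: "('k::real_normed_div_algebra \<Rightarrow> 'e::ab_group_add \<Rightarrow> 'e) \<Rightarrow> ('e \<Rightarrow> 'e \<Rightarrow> real) \<Rightarrow> 'e \<Rightarrow> nat \<Rightarrow> real"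
  where "bseq smul d z n = d (smul (of_nat n) z) 0 / real n"

definition Nd :: "('k::real_normed_div_algebra \<Rightarrow> 'e::ab_group_add \<Rightarrow> 'e) \<Rightarrow> ('e \<Rightarrow> 'e \<Rightarrow> real) \<Rightarrow> 'e \<Rightarrow> real"
  where "Nd smul d z = lim (bseq smul d z)"

lemma le_of_all_C:
  fixes u v :: real
  assumes "\<And>C. C > 1 \<Longrightarrow> u \<le> C * v" "0 \<le> v"
  shows "u \<le> v"
proof (rule ccontr)
  assume "\<not> u \<le> v"
  then have "u > v" by simp
  define C where "C = 1 + (u - v) / (2 * (v + 1))"
  have "C > 1" using \<open>u > v\<close> assms(2) by (simp add: C_def)
  have "C * v = v + (u - v) * (v / (2 * (v + 1)))" by (simp add: C_def field_simps)
  also have "\<dots> < v + (u - v) * 1"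
    using \<open>u > v\<close> assms(2) by (intro add_strict_left_mono mult_strict_left_mono) (auto simp: field_simps)
  finally show False using assms(1)[OF \<open>C > 1\<close>] by simp
qed

context
  fixes smul :: "'k::{real_normed_div_algebra,euclidean_space} \<Rightarrow> 'e::ab_group_add \<Rightarrow> 'e"
    and d :: "'e \<Rightarrow> 'e \<Rightarrow> real"
  assumes LM: "left_module smul"
    and MS: "Metric_space UNIV d"
    and AM: "asymp_multiplicative smul d"
    and SUB: "\<forall>C1>1. \<exists>C0\<ge>0. \<forall>n\<ge>2. \<forall>x y :: nat \<Rightarrow> 'e.
                d (\<Sum>i<n. x i) (\<Sum>i<n. y i) \<le> C1 * (\<Sum>i<n. d (x i) (y i)) + real n * C0"
begin

lemma d_nonneg: "0 \<le> d x y"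
  using MS by (simp add: Metric_space.nonneg)
lemma d_refl: "d x x = 0"
  using MS by (simp add: Metric_space.zero)
lemma d_sym: "d x y = d y x"
  using MS by (meson Metric_space.commute)

lemma bseq_nonneg: "0 \<le> bseq smul d z n"
  by (simp add: bseq_def d_nonneg)

lemma AMn:
  assumes "C > 1"
  shows "\<exists>K\<ge>0. \<forall>z n m. n \<ge> 1 \<longrightarrow> m \<ge> 1 \<longrightarrow>
      bseq smul d z m / C - K / m \<le> bseq smul d z (n*m) \<and> bseq smul d z (n*m) \<le> C * bseq smul d z m + K / m"
proof -
  obtain C2 C3 where C2: "C2 \<ge> 0" "C3 \<ge> 0" and H: "\<forall>(c::'k) x y. norm c * d x y / C - C2 * norm c - C3 \<le> d (smul c x) (smul c y) \<and>
        d (smul c x) (smul c y) \<le> C * norm c * d x y + C2 * norm c + C3"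
    using AM assms unfolding asymp_multiplicative_def by blast
  show ?thesis
  proof (intro exI[of _ "C2+C3"] conjI allI impI)
    show "C2 + C3 \<ge> 0" using C2 by simp
    fix z n m assume n: "(n::nat) \<ge> 1" and m: "(m::nat) \<ge> 1"
    define A where "A = d (smul (of_nat m) z) 0"
    define X where "X = d (smul (of_nat (n*m)) z) 0"
    have h: "real n * A / C - C2 * n - C3 \<le> X \<and> X \<le> C * n * A + C2 * n + C3"
      using H[rule_format, of "of_nat n" "smul (of_nat m) z" 0]
      by (simp add: lm_zero_r[OF LM] lm_nat_nat[OF LM] A_def X_def)
    have A0: "A \<ge> 0" by (simp add: A_def d_nonneg)
    have bm: "bseq smul d z m = A / m" by (simp add: bseq_def A_def)
    have bnm: "bseq smul d z (n*m) = X / (real n * real m)" by (simp add: bseq_def X_def)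
    have nr: "real n \<ge> 1" "real m \<ge> 1" using n m by auto
    have c3: "C3 * 1 \<le> C3 * real n" using nr C2 by (intro mult_left_mono) auto
    have e: "real n * (C2 + C3) = C2 * n + C3 * n" by (simp add: algebra_simps)
    have l: "real n * A / C - real n * (C2 + C3) \<le> X"
      using h c3 e by linarith
    have u: "X \<le> C * real n * A + real n * (C2 + C3)"
      using h c3 e by linarith
    have "A / m / C - (C2 + C3) / m = (real n * A / C - real n * (C2 + C3)) / (real n * real m)"
      using nr assms by (simp add: field_simps)
    also have "\<dots> \<le> X / (real n * real m)"
      using l nr by (intro divide_right_mono) auto
    finally show "bseq smul d z m / C - (C2 + C3) / m \<le> bseq smul d z (n*m)" using bm bnm by simp
    have "X / (real n * real m) \<le> (C * real n * A + real n * (C2 + C3)) / (real n * real m)"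
      using u nr by (intro divide_right_mono) auto
    also have "\<dots> = C * (A / m) + (C2 + C3) / m"
      using nr by (simp add: field_simps)
    finally show "bseq smul d z (n*m) \<le> C * bseq smul d z m + (C2 + C3) / m" using bm bnm by simp
  qed
qed


lemma bseq_cauchy_step:
  fixes x y p C K :: real and n m :: nat
  assumes "C > 1" "C \<le> 2" "K \<ge> 0" "n \<ge> 1" "m \<ge> 1"
    and h1: "x / C - K / n \<le> p" and h2: "p \<le> C * y + K / m"
  shows "x \<le> C * C * y + 2 * K / m + 2 * K / n"
proof -
  have "x \<le> C * p + C * (K / n)"
    using h1 assms(1) by (simp add: field_simps)
  also have "\<dots> \<le> C * (C * y + K / m) + C * (K / n)"
    using h2 assms(1) by (intro add_right_mono mult_left_mono) auto
  also have "\<dots> = C * C * y + C * (K / m) + C * (K / n)" by (simp add: algebra_simps)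
  also have "\<dots> \<le> C * C * y + 2 * (K / m) + 2 * (K / n)"
  proof -
    have "C * (K / m) \<le> 2 * (K / m)" "C * (K / n) \<le> 2 * (K / n)"
      using assms by (intro mult_right_mono; simp)+
    then show ?thesis by linarith
  qed
  finally show ?thesis by simp
qed

lemma bseq_conv: "convergent (bseq smul d z)"
proof -
  obtain K0 where K0: "K0 \<ge> 0" "\<forall>z n m. n \<ge> 1 \<longrightarrow> m \<ge> 1 \<longrightarrow>
      bseq smul d z m / 2 - K0 / m \<le> bseq smul d z (n*m) \<and> bseq smul d z (n*m) \<le> 2 * bseq smul d z m + K0 / m"
    using AMn[of 2] by auto
  define B where "B = 2 * bseq smul d z 1 + K0"
  have bB: "bseq smul d z n \<le> B" if "n \<ge> 1" for n
    using K0(2)[rule_format, of n 1 z] that by (simp add: B_def)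
  have B0: "B \<ge> 0" using bseq_nonneg[of z 1] K0 by (simp add: B_def)
  have key: "\<exists>M. \<forall>m\<ge>M. \<forall>n\<ge>M. bseq smul d z n - bseq smul d z m < e" if e: "e > 0" for e
  proof -
    define \<delta> where "\<delta> = min 1 (e / (6 * (B + 1)))"
    have \<delta>0: "\<delta> > 0" "\<delta> \<le> 1" using e B0 by (auto simp: \<delta>_def)
    have \<delta>B: "3 * \<delta> * B \<le> e / 2"
    proof -
      have "\<delta> * (6 * (B + 1)) \<le> e / (6 * (B + 1)) * (6 * (B + 1))"
        using B0 by (intro mult_right_mono) (auto simp: \<delta>_def)
      also have "\<dots> = e" using B0 by simp
      finally have "\<delta> * (6 * (B + 1)) \<le> e" .
      then show ?thesis using \<delta>0 B0 by (simp add: algebra_simps)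
    qed
    define C where "C = 1 + \<delta>"
    have C1: "C > 1" "C \<le> 2" using \<delta>0 by (auto simp: C_def)
    obtain K where K: "K \<ge> 0" "\<forall>z n m. n \<ge> 1 \<longrightarrow> m \<ge> 1 \<longrightarrow>
      bseq smul d z m / C - K / m \<le> bseq smul d z (n*m) \<and> bseq smul d z (n*m) \<le> C * bseq smul d z m + K / m"
      using AMn[OF C1(1)] by auto
    define M where "M = nat \<lceil>8 * K / e\<rceil> + 1"
    have M1: "M \<ge> 1" by (simp add: M_def)
    have MK: "4 * K / M < e / 2"
    proof -
      have "8 * K / e < real M" unfolding M_def by linarith
      then have "8 * K < real M * e" using e by (simp add: field_simps)
      then show ?thesis using M1 e by (simp add: field_simps)
    qed
    show ?thesis
    proof (intro exI[of _ M] allI impI)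
      fix m n assume m: "m \<ge> M" and n: "n \<ge> M"
      have m1: "m \<ge> 1" "n \<ge> 1" using m n M1 by auto
      have h1: "bseq smul d z n / C - K / n \<le> bseq smul d z (n*m)"
        using K(2)[rule_format, of m n z] m1 by (simp add: mult.commute)
      have h2: "bseq smul d z (n*m) \<le> C * bseq smul d z m + K / m"
        using K(2)[rule_format, of n m z] m1 by simp
      have st: "bseq smul d z n \<le> C * C * bseq smul d z m + 2 * K / m + 2 * K / n"
        by (rule bseq_cauchy_step[OF C1 K(1) m1(2) m1(1) h1 h2])
      have "C * C * bseq smul d z m = bseq smul d z m + (2 * \<delta> + \<delta> * \<delta>) * bseq smul d z m"
        by (simp add: C_def algebra_simps)
      also have "\<dots> \<le> bseq smul d z m + (3 * \<delta>) * B"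
        using \<delta>0 bB[OF m1(1)] bseq_nonneg[of z m]
        by (intro add_left_mono mult_mono) (auto simp: mult_right_le_one_le)
      finally have s1: "C * C * bseq smul d z m \<le> bseq smul d z m + 3 * \<delta> * B" by simp
      have s2: "2 * K / m \<le> 2 * K / M" "2 * K / n \<le> 2 * K / M"
        using m n M1 K(1) by (auto intro!: divide_left_mono)
      show "bseq smul d z n - bseq smul d z m < e"
        using st s1 s2 \<delta>B MK by linarith
    qed
  qed
  have "Cauchy (bseq smul d z)"
  proof (rule CauchyI)
    fix e :: real assume "e > 0"
    obtain M where M: "\<forall>m\<ge>M. \<forall>n\<ge>M. bseq smul d z n - bseq smul d z m < e"
      using key[OF \<open>e > 0\<close>] by blast
    show "\<exists>M. \<forall>m\<ge>M. \<forall>n\<ge>M. norm (bseq smul d z m - bseq smul d z n) < e"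
      using M by (intro exI[of _ M]) (auto simp: abs_less_iff)
  qed
  then show ?thesis by (simp add: Cauchy_convergent_iff)
qed

lemma bseq_lim: "bseq smul d z \<longlonglongrightarrow> Nd smul d z"
  unfolding Nd_def using bseq_conv convergent_LIMSEQ_iff by blast


lemma S2:
  assumes "C > 1"
  shows "\<exists>C0\<ge>0. \<forall>p q r s. d (p + q) (r + s) \<le> C * (d p r + d q s) + 2 * C0"
proof -
  obtain C0 where C0: "C0 \<ge> 0" "\<forall>n\<ge>2. \<forall>x y :: nat \<Rightarrow> 'e.
                d (\<Sum>i<n. x i) (\<Sum>i<n. y i) \<le> C * (\<Sum>i<n. d (x i) (y i)) + real n * C0"
    using SUB assms by blast
  show ?thesis
  proof (intro exI[of _ C0] conjI allI)
    fix p q r s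
    define X :: "nat \<Rightarrow> 'e" where "X = (\<lambda>i. if i = 0 then p else q)"
    define Y :: "nat \<Rightarrow> 'e" where "Y = (\<lambda>i. if i = 0 then r else s)"
    have "d (\<Sum>i<2. X i) (\<Sum>i<2. Y i) \<le> C * (\<Sum>i<2. d (X i) (Y i)) + real 2 * C0"
      using C0(2)[rule_format, of 2 X Y] by simp
    then show "d (p + q) (r + s) \<le> C * (d p r + d q s) + 2 * C0"
      unfolding X_def Y_def
      by (simp add: numeral_2_eq_2 lessThan_Suc add.commute)
  qed (use C0 in auto)
qed

lemma Sn:
  assumes "C > 1"
  shows "\<exists>C0\<ge>0. \<forall>z n. n \<ge> 1 \<longrightarrow> d (smul (of_nat n) z) 0 \<le> C * n * d z 0 + n * C0"
proof -
  obtain C0 where C0: "C0 \<ge> 0" "\<forall>n\<ge>2. \<forall>x y :: nat \<Rightarrow> 'e.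
                d (\<Sum>i<n. x i) (\<Sum>i<n. y i) \<le> C * (\<Sum>i<n. d (x i) (y i)) + real n * C0"
    using SUB assms by blast
  show ?thesis
  proof (intro exI[of _ C0] conjI allI impI)
    fix z and n :: nat assume n: "n \<ge> 1"
    show "d (smul (of_nat n) z) 0 \<le> C * n * d z 0 + n * C0"
    proof (cases "n = 1")
      case True
      have "d z 0 \<le> C * d z 0" using assms d_nonneg[of z 0] by (simp add: mult_le_cancel_right1)
      then show ?thesis using True C0 by (simp add: lm_one[OF LM])
    next
      case False
      then have "n \<ge> 2" using n by simp
      then have "d (\<Sum>i<n. (\<lambda>i. z) i) (\<Sum>i<n. (\<lambda>i. 0) i) \<le> C * (\<Sum>i<n. d ((\<lambda>i. z) i) ((\<lambda>i. 0) i)) + real n * C0"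
        using C0(2) by blast
      then show ?thesis by (simp add: lm_nat_sum[OF LM])
    qed
  qed (use C0 in auto)
qed

lemma div_lower:
  fixes a X C K Y :: real
  assumes "n > 0" "a * X / C - K \<le> Y"
  shows "a * (X / n) / C - K / n \<le> Y / n"
proof -
  have "(a * X / C - K) / n \<le> Y / n" using assms by (intro divide_right_mono) auto
  then show ?thesis by (simp add: diff_divide_distrib ac_simps)
qed

lemma div_upper:
  fixes a X C K Y :: real
  assumes "n > 0" "Y \<le> C * a * X + K"
  shows "Y / n \<le> C * a * (X / n) + K / n"
proof -
  have "Y / n \<le> (C * a * X + K) / n" using assms by (intro divide_right_mono) auto
  then show ?thesis by (simp add: add_divide_distrib)
qed

lemma Nd_nonneg: "Nd smul d z \<ge> 0"
  using bseq_lim[of z] bseq_nonneg by (intro LIMSEQ_le_const) auto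

lemma Nd_hom: "Nd smul d (smul a z) = norm a * Nd smul d z"
proof -
  have up: "Nd smul d (smul a z) \<le> C * (norm a * Nd smul d z)"
   and lo: "norm a * Nd smul d z \<le> C * Nd smul d (smul a z)" if C: "C > 1" for C
  proof -
    obtain C2 C3 where C2: "C2 \<ge> 0" "C3 \<ge> 0" and H: "\<forall>(c::'k) x y. norm c * d x y / C - C2 * norm c - C3 \<le> d (smul c x) (smul c y) \<and>
        d (smul c x) (smul c y) \<le> C * norm c * d x y + C2 * norm c + C3"
      using AM C unfolding asymp_multiplicative_def by blast
    have hn: "norm a * bseq smul d z n / C - (C2 * norm a + C3) / n \<le> bseq smul d (smul a z) n \<and>
              bseq smul d (smul a z) n \<le> C * norm a * bseq smul d z n + (C2 * norm a + C3) / n"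
      if n: "n \<ge> 1" for n
    proof -
      have h: "norm a * d (smul (of_nat n) z) 0 / C - (C2 * norm a + C3) \<le> d (smul (of_nat n) (smul a z)) 0 \<and>
               d (smul (of_nat n) (smul a z)) 0 \<le> C * norm a * d (smul (of_nat n) z) 0 + (C2 * norm a + C3)"
        using H[rule_format, of a "smul (of_nat n) z" 0] by (simp add: lm_zero_r[OF LM] lm_comm_nat[OF LM] algebra_simps)
      have np: "real n > 0" using n by simp
      show ?thesis unfolding bseq_def
        using div_lower[OF np conjunct1[OF h]] div_upper[OF np conjunct2[OF h]] by simp
    qed
    have t1: "(\<lambda>n. norm a * bseq smul d z n / C - (C2 * norm a + C3) / real n) \<longlonglongrightarrow> norm a * Nd smul d z / C - 0"
      using C by (intro tendsto_intros bseq_lim) auto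
    have t2: "(\<lambda>n. C * norm a * bseq smul d z n + (C2 * norm a + C3) / real n) \<longlonglongrightarrow> C * norm a * Nd smul d z + 0"
      by (intro tendsto_intros bseq_lim)
    have "norm a * Nd smul d z / C - 0 \<le> Nd smul d (smul a z)"
      by (rule LIMSEQ_le[OF t1 bseq_lim]) (use hn in \<open>auto intro!: exI[of _ 1]\<close>)
    then show "norm a * Nd smul d z \<le> C * Nd smul d (smul a z)" using C by (simp add: field_simps less_imp_neq[symmetric])
    have "Nd smul d (smul a z) \<le> C * norm a * Nd smul d z + 0"
      by (rule LIMSEQ_le[OF bseq_lim t2]) (use hn in \<open>auto intro!: exI[of _ 1]\<close>)
    then show "Nd smul d (smul a z) \<le> C * (norm a * Nd smul d z)" by (simp add: mult.assoc)
  qed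
  have "Nd smul d (smul a z) \<le> norm a * Nd smul d z"
    by (rule le_of_all_C[OF up]) (auto intro: Nd_nonneg mult_nonneg_nonneg)
  moreover have "norm a * Nd smul d z \<le> Nd smul d (smul a z)"
    by (rule le_of_all_C[OF lo]) (auto intro: Nd_nonneg)
  ultimately show ?thesis by simp
qed

lemma Nd_triangle: "Nd smul d (x + y) \<le> Nd smul d x + Nd smul d y"
proof (rule le_of_all_C)
  fix C :: real assume C: "C > 1"
  obtain C0 where C0: "C0 \<ge> 0" "\<forall>p q r s. d (p + q) (r + s) \<le> C * (d p r + d q s) + 2 * C0"
    using S2[OF C] by blast
  have hn: "bseq smul d (x + y) n \<le> C * (bseq smul d x n + bseq smul d y n) + 2 * C0 / n" if n: "n \<ge> 1" for n
  proof -
    have h: "d (smul (of_nat n) (x + y)) 0 \<le> C * 1 * (d (smul (of_nat n) x) 0 + d (smul (of_nat n) y) 0) + 2 * C0"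
      using C0(2)[rule_format, of "smul (of_nat n) x" "smul (of_nat n) y" 0 0] by (simp add: lm_add_r[OF LM])
    have np: "real n > 0" using n by simp
    show ?thesis unfolding bseq_def using div_upper[OF np h] by (simp add: add_divide_distrib)
  qed
  have t2: "(\<lambda>n. C * (bseq smul d x n + bseq smul d y n) + 2 * C0 / real n) \<longlonglongrightarrow> C * (Nd smul d x + Nd smul d y) + 0"
    by (intro tendsto_intros bseq_lim)
  show "Nd smul d (x + y) \<le> C * (Nd smul d x + Nd smul d y)"
    using LIMSEQ_le[OF bseq_lim t2] hn by auto
qed (auto intro: Nd_nonneg add_nonneg_nonneg)


lemma NB:
  assumes C: "C > 1"
  shows "\<exists>K\<ge>0. \<forall>z. Nd smul d z \<le> C * d z 0 + K \<and> d z 0 \<le> C * Nd smul d z + K"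
proof -
  obtain C0 :: real where C0: "C0 \<ge> 0" "\<forall>z n. n \<ge> 1 \<longrightarrow> d (smul (of_nat n) z) 0 \<le> C * n * d z 0 + n * C0"
    using Sn[OF C] by blast
  obtain C2 C3 where C2: "C2 \<ge> 0" "C3 \<ge> 0" and H: "\<forall>(c::'k) x y. norm c * d x y / C - C2 * norm c - C3 \<le> d (smul c x) (smul c y) \<and>
        d (smul c x) (smul c y) \<le> C * norm c * d x y + C2 * norm c + C3"
    using AM C unfolding asymp_multiplicative_def by blast
  show ?thesis
  proof (intro exI[of _ "max C0 (C * C2)"] conjI allI)
    show "max C0 (C * C2) \<ge> 0" using C0 by simp
    fix z
    have hu: "bseq smul d z n \<le> C * d z 0 + C0" if n: "n \<ge> 1" for n
    proof -
      have np: "real n > 0" using n by simp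
      have a: "d (smul (of_nat n) z) 0 \<le> C * n * d z 0 + n * C0" using C0(2) n by blast
      have "bseq smul d z n \<le> (C * n * d z 0 + n * C0) / n"
        unfolding bseq_def by (rule divide_right_mono[OF a]) (use np in simp)
      also have "\<dots> = C * d z 0 + C0" using np by (simp add: field_simps)
      finally show ?thesis .
    qed
    have "Nd smul d z \<le> C * d z 0 + C0"
      by (rule LIMSEQ_le[OF bseq_lim tendsto_const]) (use hu in \<open>auto intro!: exI[of _ 1]\<close>)
    then show "Nd smul d z \<le> C * d z 0 + max C0 (C * C2)" by linarith
    have hl: "d z 0 / C - (C2 + C3 / n) \<le> bseq smul d z n" if n: "n \<ge> 1" for n
    proof -
      have np: "real n > 0" using n by simp
      have h0: "norm (of_nat n :: 'k) * d z 0 / C - C2 * norm (of_nat n :: 'k) - C3 \<le> d (smul (of_nat n) z) (smul (of_nat n) 0)"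
        using H by blast
      have h: "real n * d z 0 / C - (C2 * n + C3) \<le> d (smul (of_nat n) z) 0"
        using h0 by (simp add: lm_zero_r[OF LM])
      have "(real n * d z 0 / C - (C2 * n + C3)) / n \<le> d (smul (of_nat n) z) 0 / n"
        by (rule divide_right_mono[OF h]) (use np in simp)
      moreover have "(real n * d z 0 / C - (C2 * n + C3)) / n = d z 0 / C - (C2 + C3 / n)"
        using np by (simp add: field_simps)
      ultimately show ?thesis unfolding bseq_def by simp
    qed
    have t: "(\<lambda>n. d z 0 / C - (C2 + C3 / real n)) \<longlonglongrightarrow> d z 0 / C - (C2 + 0)"
      by (intro tendsto_intros)
    have "d z 0 / C - (C2 + 0) \<le> Nd smul d z"
      by (rule LIMSEQ_le[OF t bseq_lim]) (use hl in \<open>auto intro!: exI[of _ 1]\<close>)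
    then have "d z 0 / C \<le> Nd smul d z + C2" by simp
    then have "C * (d z 0 / C) \<le> C * (Nd smul d z + C2)" using C by (intro mult_left_mono) auto
    then have "d z 0 \<le> C * Nd smul d z + C * C2" using C by (simp add: algebra_simps)
    then show "d z 0 \<le> C * Nd smul d z + max C0 (C * C2)" by linarith
  qed
qed

lemma TR:
  assumes C: "C > 1"
  shows "\<exists>K\<ge>0. \<forall>x y. d x y \<le> C * d (x - y) 0 + K \<and> d (x - y) 0 \<le> C * d x y + K"
proof -
  obtain C0 where C0: "C0 \<ge> 0" "\<forall>p q r s. d (p + q) (r + s) \<le> C * (d p r + d q s) + 2 * C0"
    using S2[OF C] by blast
  show ?thesis
  proof (intro exI[of _ "2 * C0"] conjI allI)
    fix x y
    show "d x y \<le> C * d (x - y) 0 + 2 * C0"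
      using C0(2)[rule_format, of "x - y" y 0 y] by (simp add: d_refl)
    show "d (x - y) 0 \<le> C * d x y + 2 * C0"
      using C0(2)[rule_format, of x "- y" y "- y"] by (simp add: d_refl)
  qed (use C0 in auto)
qed

lemma Nd_iso: "asymp_isometric d (\<lambda>x y. Nd smul d (x - y))"
  unfolding asymp_isometric_def
proof (intro allI impI)
  fix C1 :: real assume C1: "C1 > 1"
  define c where "c = sqrt C1"
  have c: "c > 1" "c * c = C1" using C1 by (auto simp: c_def)
  obtain K1 where K1: "K1 \<ge> 0" "\<forall>z. Nd smul d z \<le> c * d z 0 + K1 \<and> d z 0 \<le> c * Nd smul d z + K1"
    using NB[OF c(1)] by blast
  obtain K2 where K2: "K2 \<ge> 0" "\<forall>x y. d x y \<le> c * d (x - y) 0 + K2 \<and> d (x - y) 0 \<le> c * d x y + K2"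
    using TR[OF c(1)] by blast
  show "\<exists>C2\<ge>0. \<forall>x y. Nd smul d (x - y) / C1 - C2 \<le> d x y \<and> d x y \<le> C1 * Nd smul d (x - y) + C2"
  proof (intro exI[of _ "c * K1 + K2 + c * K2 + K1"] conjI allI)
    show "0 \<le> c * K1 + K2 + c * K2 + K1" using c K1 K2 by simp
    fix x y
    have a1: "d x y \<le> c * d (x - y) 0 + K2" using K2 by blast
    have a2: "d (x - y) 0 \<le> c * Nd smul d (x - y) + K1" using K1 by blast
    have "d x y \<le> c * (c * Nd smul d (x - y) + K1) + K2"
      using a1 mult_left_mono[OF a2, of c] c by linarith
    moreover have "c * (c * Nd smul d (x - y)) = C1 * Nd smul d (x - y)"
      using c(2) by (simp add: mult.assoc[symmetric])
    ultimately have e1: "d x y \<le> C1 * Nd smul d (x - y) + (c * K1 + K2)"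
      by (simp add: algebra_simps)
    have "c * K2 \<ge> 0" using c K2 by simp
    then show "d x y \<le> C1 * Nd smul d (x - y) + (c * K1 + K2 + c * K2 + K1)"
      using e1 K1 by linarith
    have b1: "Nd smul d (x - y) \<le> c * d (x - y) 0 + K1" using K1 by blast
    have b2: "d (x - y) 0 \<le> c * d x y + K2" using K2 by blast
    have "Nd smul d (x - y) \<le> c * (c * d x y + K2) + K1"
      using b1 mult_left_mono[OF b2, of c] c by linarith
    moreover have "c * (c * d x y) = C1 * d x y"
      using c(2) by (simp add: mult.assoc[symmetric])
    ultimately have "Nd smul d (x - y) \<le> C1 * d x y + (c * K2 + K1)"
      by (simp add: algebra_simps)
    then have f1: "Nd smul d (x - y) / C1 - (c * K2 + K1) / C1 \<le> d x y"
      using C1 by (simp add: field_simps)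
    have f2: "(c * K2 + K1) / C1 \<le> (c * K2 + K1) / 1"
      using C1 c K1 K2 by (intro divide_left_mono) auto
    have f3: "c * K1 \<ge> 0" using c K1 by simp
    have f2': "(c * K2 + K1) / C1 \<le> c * K2 + K1" using f2 by simp
    show "Nd smul d (x - y) / C1 - (c * K1 + K2 + c * K2 + K1) \<le> d x y"
      using f1 f2' f3 K1(1) K2(1) by linarith
  qed
qed

lemma Nd_zero:
  assumes UB: "\<forall>V. linear_subspace smul V \<and> V \<noteq> {0} \<longrightarrow> unbounded_on d V"
    and z: "Nd smul d z = 0"
  shows "z = 0"
proof (rule ccontr)
  assume nz: "z \<noteq> 0"
  define V where "V = range (\<lambda>a. smul a z)"
  have "linear_subspace smul V"
    unfolding linear_subspace_def V_def
  proof (intro conjI ballI allI)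
    show "0 \<in> range (\<lambda>a. smul a z)" using lm_zero_l[OF LM, of z] by (metis rangeI)
    fix x y assume "x \<in> range (\<lambda>a. smul a z)" "y \<in> range (\<lambda>a. smul a z)"
    then show "x + y \<in> range (\<lambda>a. smul a z)" by (auto simp: lm_add_l[OF LM, symmetric])
  next
    fix a x assume "x \<in> range (\<lambda>a. smul a z)"
    then show "smul a x \<in> range (\<lambda>a. smul a z)" by (auto simp: lm_mult[OF LM, symmetric])
  qed
  moreover have "V \<noteq> {0}"
    using nz lm_one[OF LM, of z] unfolding V_def by (metis rangeI singletonD)
  ultimately have ub: "unbounded_on d V" using UB by blast
  obtain K1 where K1: "K1 \<ge> 0" "\<forall>z. Nd smul d z \<le> 2 * d z 0 + K1 \<and> d z 0 \<le> 2 * Nd smul d z + K1"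
    using NB[of 2] by auto
  obtain K2 where K2: "K2 \<ge> 0" "\<forall>x y. d x y \<le> 2 * d (x - y) 0 + K2 \<and> d (x - y) 0 \<le> 2 * d x y + K2"
    using TR[of 2] by auto
  obtain p q where pq: "p \<in> V" "q \<in> V" "d p q > 2 * K1 + K2"
    using ub unfolding unbounded_on_def by blast
  then obtain a b where ab: "p = smul a z" "q = smul b z" unfolding V_def by blast
  have "p - q = smul (a - b) z" using ab by (simp add: lm_diff_l[OF LM])
  then have "Nd smul d (p - q) = 0" using z by (simp add: Nd_hom)
  then have "d (p - q) 0 \<le> K1" using K1 by (metis add_0 mult_zero_right)
  moreover have "d p q \<le> 2 * d (p - q) 0 + K2" using K2 by blast
  ultimately have "d p q \<le> 2 * K1 + K2" by linarith
  then show False using pq by simp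
qed

lemma converse_main:
  assumes UB: "\<forall>V. linear_subspace smul V \<and> V \<noteq> {0} \<longrightarrow> unbounded_on d V"
  shows "\<exists>N. is_norm smul N \<and> asymp_isometric d (\<lambda>x y. N (x - y))"
proof (intro exI conjI)
  show "asymp_isometric d (\<lambda>x y. Nd smul d (x - y))" by (rule Nd_iso)
  show "is_norm smul (Nd smul d)"
    unfolding is_norm_def
  proof (intro conjI allI)
    fix x
    show "0 \<le> Nd smul d x" by (rule Nd_nonneg)
    have "Nd smul d 0 = 0" using Nd_hom[of 0 0] by (simp add: lm_zero_l[OF LM])
    then show "(Nd smul d x = 0) = (x = 0)" using Nd_zero[OF UB] by blast
  qed (auto simp: Nd_hom Nd_triangle)
qed

end

lemma lim_sandwich_C:
  fixes g :: "nat \<Rightarrow> real"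
  assumes L: "L \<ge> 0"
    and H: "\<And>C. C > 1 \<Longrightarrow> \<exists>K. \<forall>n\<ge>1. L / C - K / n \<le> g n \<and> g n \<le> C * L + K / n"
  shows "g \<longlonglongrightarrow> L"
proof (rule LIMSEQ_I)
  fix r :: real assume r: "r > 0"
  define C where "C = 1 + r / (2 * (L + 1))"
  have C1: "C > 1" using r L by (simp add: C_def)
  have CL: "(C - 1) * L < r / 2"
  proof -
    have "(C - 1) * L = r / 2 * (L / (L + 1))" using L by (simp add: C_def field_simps)
    also have "\<dots> < r / 2 * 1" using r L by (intro mult_strict_left_mono) auto
    finally show ?thesis by simp
  qed
  have LC: "L - L / C \<le> (C - 1) * L"
  proof -
    have "L - L / C = (C - 1) * L / C" using C1 by (simp add: field_simps)
    also have "\<dots> \<le> (C - 1) * L / 1" using C1 L by (intro divide_left_mono) auto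
    finally show ?thesis by simp
  qed
  obtain K where K: "\<forall>n\<ge>1. L / C - K / n \<le> g n \<and> g n \<le> C * L + K / n" using H[OF C1] by blast
  define no where "no = nat \<lceil>2 * \<bar>K\<bar> / r\<rceil> + 1"
  show "\<exists>no. \<forall>n\<ge>no. norm (g n - L) < r"
  proof (intro exI[of _ no] allI impI)
    fix n assume n: "no \<le> n"
    have n1: "n \<ge> 1" using n by (simp add: no_def)
    have "2 * \<bar>K\<bar> / r < real n" using n unfolding no_def by linarith
    then have "2 * \<bar>K\<bar> < real n * r" using r by (simp add: field_simps)
    then have Kn: "\<bar>K\<bar> / n < r / 2" using n1 by (simp add: field_simps)
    have "\<bar>K / n\<bar> = \<bar>K\<bar> / n" by simp
    then have "K / n < r / 2" "- (K / n) < r / 2" using Kn by linarith+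
    have k: "L / C - K / n \<le> g n" "g n \<le> C * L + K / n" using K n1 by auto
    have e: "(C - 1) * L = C * L - L" by (simp add: algebra_simps)
    have "g n - L < r" "L - g n < r" using k CL LC e \<open>K / n < r / 2\<close> \<open>- (K / n) < r / 2\<close> by linarith+
    then show "norm (g n - L) < r" by (simp add: abs_less_iff)
  qed
qed

context
  fixes smul :: "'k::{real_normed_div_algebra,euclidean_space} \<Rightarrow> 'e::ab_group_add \<Rightarrow> 'e"
    and d :: "'e \<Rightarrow> 'e \<Rightarrow> real" and N :: "'e \<Rightarrow> real"
  assumes LM: "left_module smul"
    and NN: "is_norm smul N"
    and ISO: "asymp_isometric d (\<lambda>x y. N (x - y))"
begin

lemma N_nonneg: "N x \<ge> 0" using NN unfolding is_norm_def by blast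
lemma N_hom: "N (smul a x) = norm a * N x" using NN unfolding is_norm_def by blast
lemma N_tri: "N (x + y) \<le> N x + N y" using NN unfolding is_norm_def by blast
lemma N_zero: "N x = 0 \<longleftrightarrow> x = 0" using NN unfolding is_norm_def by blast

lemma N_sum: "N (\<Sum>i<(n::nat). z i) \<le> (\<Sum>i<n. N (z i))"
proof (induction n)
  case 0 then show ?case using N_zero[of 0] by simp
next
  case (Suc n) then show ?case using N_tri[of "\<Sum>i<n. z i" "z n"] by simp
qed

lemma ISO_at:
  assumes "C > 1"
  shows "\<exists>K\<ge>0. \<forall>x y. N (x - y) / C - K \<le> d x y \<and> d x y \<le> C * N (x - y) + K"
  using ISO assms unfolding asymp_isometric_def by blast

lemma fwd_AM: "asymp_multiplicative smul d"
  unfolding asymp_multiplicative_def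
proof (intro allI impI)
  fix C1 :: real assume C1: "C1 > 1"
  define c where "c = sqrt C1"
  have c: "c > 1" "c * c = C1" using C1 by (auto simp: c_def)
  obtain K where K: "K \<ge> 0" "\<forall>x y. N (x - y) / c - K \<le> d x y \<and> d x y \<le> c * N (x - y) + K"
    using ISO_at[OF c(1)] by blast
  show "\<exists>C2\<ge>0. \<exists>C3\<ge>0. \<forall>(k::'k) x y. norm k * d x y / C1 - C2 * norm k - C3 \<le> d (smul k x) (smul k y) \<and>
        d (smul k x) (smul k y) \<le> C1 * norm k * d x y + C2 * norm k + C3"
  proof (rule exI[of _ "C1 * K"], intro exI[of _ K] conjI allI)
    show "C1 * K \<ge> 0" "K \<ge> 0" using C1 K by auto
    fix k :: 'k and x y
    have Nk: "N (smul k x - smul k y) = norm k * N (x - y)"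
      by (simp add: lm_diff_r[OF LM, symmetric] N_hom)
    have u0: "d (smul k x) (smul k y) \<le> c * N (smul k x - smul k y) + K"
      and l0: "N (smul k x - smul k y) / c - K \<le> d (smul k x) (smul k y)" using K by blast+
    have u1: "d (smul k x) (smul k y) \<le> c * (norm k * N (x - y)) + K" using u0 Nk by simp
    have l1: "norm k * N (x - y) / c - K \<le> d (smul k x) (smul k y)" using l0 Nk by simp
    have a: "N (x - y) \<le> c * d x y + c * K"
    proof -
      have "N (x - y) / c - K \<le> d x y" using K by blast
      then show ?thesis using c by (simp add: field_simps)
    qed
    have "d x y \<le> c * N (x - y) + K" using K by blast
    then have b: "d x y - K \<le> c * N (x - y)" by linarith
    have "c * (norm k * N (x - y)) \<le> c * (norm k * (c * d x y + c * K))"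
      using a c by (intro mult_left_mono) auto
    also have "\<dots> = (c * c) * norm k * d x y + (c * c) * K * norm k"
      by (simp add: algebra_simps)
    also have "\<dots> = C1 * norm k * d x y + C1 * K * norm k"
      by (simp add: c(2))
    finally show "d (smul k x) (smul k y) \<le> C1 * norm k * d x y + C1 * K * norm k + K"
      using u1 by linarith
    have "norm k * (d x y - K) / C1 = norm k * (d x y - K) / c / c"
      using c by (simp add: field_simps)
    also have "\<dots> \<le> norm k * (c * N (x - y)) / c / c"
      using b c by (intro divide_right_mono mult_left_mono) auto
    also have "\<dots> = norm k * N (x - y) / c" using c by (simp add: field_simps)
    finally have l2: "norm k * (d x y - K) / C1 \<le> norm k * N (x - y) / c" .
    have "norm k * K / C1 \<le> norm k * K / 1"
      using C1 K by (intro divide_left_mono) auto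
    also have "\<dots> \<le> C1 * K * norm k"
    proof -
      have "1 * (norm k * K) \<le> C1 * (norm k * K)" using C1 K by (intro mult_right_mono) auto
      then show ?thesis by (simp add: algebra_simps)
    qed
    finally have l3: "norm k * K / C1 \<le> C1 * K * norm k" .
    have "norm k * (d x y - K) / C1 = norm k * d x y / C1 - norm k * K / C1"
      by (simp add: algebra_simps diff_divide_distrib)
    then show "norm k * d x y / C1 - C1 * K * norm k - K \<le> d (smul k x) (smul k y)"
      using l1 l2 l3 by linarith
  qed
qed

lemma fwd_UB: "\<forall>V. linear_subspace smul V \<and> V \<noteq> {0} \<longrightarrow> unbounded_on d V"
proof (intro allI impI)
  fix V assume V: "linear_subspace smul V \<and> V \<noteq> {0}"
  then have V0: "0 \<in> V" and Vs: "\<forall>a. \<forall>x\<in>V. smul a x \<in> V" unfolding linear_subspace_def by auto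
  obtain v where v: "v \<in> V" "v \<noteq> 0" using V V0 by blast
  have Nv: "N v > 0" using v N_zero N_nonneg by (metis less_eq_real_def)
  obtain K where K: "K \<ge> 0" "\<forall>x y. N (x - y) / 2 - K \<le> d x y \<and> d x y \<le> 2 * N (x - y) + K"
    using ISO_at[of 2] by auto
  show "unbounded_on d V"
    unfolding unbounded_on_def
  proof
    fix B :: real
    define t where "t = 2 * (\<bar>B\<bar> + K + 1) / N v"
    have t0: "t \<ge> 0" using Nv K by (simp add: t_def)
    have nt: "norm (of_real t :: 'k) = t" using t0 by (metis abs_of_nonneg norm_of_real)
    have "N (smul (of_real t) v - 0) = t * N v" by (simp add: N_hom abs_of_nonneg[OF t0])
    also have "\<dots> = 2 * (\<bar>B\<bar> + K + 1)" using Nv by (simp add: t_def)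
    finally have "N (smul (of_real t) v - 0) = 2 * (\<bar>B\<bar> + K + 1)" .
    then have "d (smul (of_real t) v) 0 \<ge> (\<bar>B\<bar> + K + 1) - K"
      using K(2)[rule_format, of "smul (of_real t) v" 0] by (simp add: field_simps)
    then have "d (smul (of_real t) v) 0 > B" by linarith
    then show "\<exists>x\<in>V. \<exists>y\<in>V. B < d x y" using Vs v V0 by blast
  qed
qed

lemma fwd_SUB: "\<forall>C1>1. \<exists>C0\<ge>0. \<forall>n\<ge>2. \<forall>x y :: nat \<Rightarrow> 'e.
                d (\<Sum>i<n. x i) (\<Sum>i<n. y i) \<le> C1 * (\<Sum>i<n. d (x i) (y i)) + real n * C0"
proof (intro allI impI)
  fix C1 :: real assume C1: "C1 > 1"
  define c where "c = sqrt C1"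
  have c: "c > 1" "c * c = C1" using C1 by (auto simp: c_def)
  obtain K where K: "K \<ge> 0" "\<forall>x y. N (x - y) / c - K \<le> d x y \<and> d x y \<le> c * N (x - y) + K"
    using ISO_at[OF c(1)] by blast
  show "\<exists>C0\<ge>0. \<forall>n\<ge>2. \<forall>x y :: nat \<Rightarrow> 'e.
                d (\<Sum>i<n. x i) (\<Sum>i<n. y i) \<le> C1 * (\<Sum>i<n. d (x i) (y i)) + real n * C0"
  proof (intro exI[of _ "C1 * K + K"] conjI allI impI)
    show "C1 * K + K \<ge> 0" using C1 K by simp
    fix n :: nat and x y :: "nat \<Rightarrow> 'e" assume n: "n \<ge> 2"
    have a: "N (x i - y i) \<le> c * d (x i) (y i) + c * K" for i
    proof -
      have "N (x i - y i) / c - K \<le> d (x i) (y i)" using K by blast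
      then show ?thesis using c by (simp add: field_simps)
    qed
    have "d (\<Sum>i<n. x i) (\<Sum>i<n. y i) \<le> c * N ((\<Sum>i<n. x i) - (\<Sum>i<n. y i)) + K"
      using K by blast
    also have "(\<Sum>i<n. x i) - (\<Sum>i<n. y i) = (\<Sum>i<n. x i - y i)" by (simp add: sum_subtractf)
    also have "c * N (\<Sum>i<n. x i - y i) \<le> c * (\<Sum>i<n. c * d (x i) (y i) + c * K)"
      using c N_sum[of "\<lambda>i. x i - y i" n] sum_mono[of "{..<n}" "\<lambda>i. N (x i - y i)", OF a]
      by (intro mult_left_mono) auto
    also have "c * (\<Sum>i<n. c * d (x i) (y i) + c * K) = C1 * (\<Sum>i<n. d (x i) (y i)) + real n * (C1 * K)"
    proof -
      have "(\<Sum>i<n. c * d (x i) (y i) + c * K) = c * (\<Sum>i<n. d (x i) (y i)) + real n * (c * K)"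
        by (simp add: sum.distrib sum_distrib_left)
      then have "c * (\<Sum>i<n. c * d (x i) (y i) + c * K) = (c * c) * (\<Sum>i<n. d (x i) (y i)) + real n * ((c * c) * K)"
        by (simp add: algebra_simps)
      then show ?thesis by (simp add: c(2))
    qed
    finally have "d (\<Sum>i<n. x i) (\<Sum>i<n. y i) \<le> C1 * (\<Sum>i<n. d (x i) (y i)) + real n * (C1 * K) + K"
      by simp
    moreover have "K \<le> real n * K" using n K by (simp add: mult_le_cancel_right1)
    ultimately show "d (\<Sum>i<n. x i) (\<Sum>i<n. y i) \<le> C1 * (\<Sum>i<n. d (x i) (y i)) + real n * (C1 * K + K)"
      by (simp add: algebra_simps)
  qed
qed

end

lemma haar_lim:
  fixes smul :: "'k::{real_normed_div_algebra,euclidean_space} \<Rightarrow> 'e::ab_group_add \<Rightarrow> 'e"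
    and d :: "'e \<Rightarrow> 'e \<Rightarrow> real" and N :: "'e \<Rightarrow> real" and \<mu> :: "'k measure"
  assumes MVS: "metric_vector_space smul d" and H: "right_haar_U \<mu>"
    and NN: "is_norm smul N" and ISO: "asymp_isometric d (\<lambda>x y. N (x - y))"
  shows "(\<lambda>n. (\<integral>u. d (smul (of_nat n * u) x) 0 \<partial>\<mu>) / real n) \<longlonglongrightarrow> N x"
proof -
  have LM: "left_module smul" and MS: "Metric_space UNIV d"
    and SM: "continuous_map (prod_topology (euclidean :: 'k topology) (Metric_space.mtopology UNIV d))
        (Metric_space.mtopology UNIV d) (\<lambda>(a, x). smul a x)"
    using MVS unfolding metric_vector_space_def by auto
  have P: "prob_space \<mu>" and S: "sets \<mu> = sets (restrict_space borel unit_sphere)"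
    using H unfolding right_haar_U_def by auto
  interpret P: prob_space \<mu> by (rule P)
  have sp: "space \<mu> = unit_sphere" using sets_eq_imp_space_eq[OF S] by (simp add: space_restrict_space)
  have meas: "(\<lambda>u. d (smul (of_nat n * u) x) 0) \<in> borel_measurable \<mu>" for n
  proof -
    have "continuous_map euclidean (prod_topology euclidean (Metric_space.mtopology UNIV d)) (\<lambda>u::'k. (of_nat n * u, x))"
      by (intro continuous_map_pairedI) (auto simp: Metric_space.topspace_mtopology[OF MS] intro!: continuous_intros)
    from continuous_map_compose[OF this SM]
    have g: "continuous_map euclidean (Metric_space.mtopology UNIV d) (\<lambda>u::'k. smul (of_nat n * u) x)"
      by (simp add: o_def)
    have m1: "mtopology_of (metric (UNIV, d)) = Metric_space.mtopology UNIV d"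
      using Metric_space.mtopology_of[OF MS] by simp
    have m2: "mdist (metric (UNIV, d)) = d" using Metric_space.mdist_metric[OF MS] by simp
    have "continuous_map euclidean euclidean (\<lambda>u::'k. mdist (metric (UNIV, d)) (smul (of_nat n * u) x) 0)"
      by (rule continuous_map_mdist) (use g in \<open>simp_all add: m1 Metric_space.topspace_mtopology[OF MS]\<close>)
    then have "continuous_on UNIV (\<lambda>u::'k. d (smul (of_nat n * u) x) 0)" by (simp add: m2)
    then have "(\<lambda>u::'k. d (smul (of_nat n * u) x) 0) \<in> borel_measurable borel"
      by (rule borel_measurable_continuous_onI)
    then have "(\<lambda>u::'k. d (smul (of_nat n * u) x) 0) \<in> borel_measurable (restrict_space borel unit_sphere)"
      by (rule measurable_restrict_space1)
    then show ?thesis by (subst measurable_cong_sets[OF S refl])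
  qed
  show ?thesis
  proof (rule lim_sandwich_C)
    show "N x \<ge> 0" using N_nonneg[OF LM NN ISO] .
    fix C :: real assume C: "C > 1"
    obtain K where K: "K \<ge> 0" "\<forall>x y. N (x - y) / C - K \<le> d x y \<and> d x y \<le> C * N (x - y) + K"
      using ISO_at[OF LM NN ISO C] by blast
    show "\<exists>K::real. \<forall>n::nat. n \<ge> 1 \<longrightarrow> N x / C - K / real n \<le> (\<integral>u. d (smul (of_nat n * u) x) 0 \<partial>\<mu>) / real n \<and>
                  (\<integral>u. d (smul (of_nat n * u) x) 0 \<partial>\<mu>) / real n \<le> C * N x + K / real n"
    proof (intro exI[of _ K] allI impI conjI)
      fix n :: nat assume n: "n \<ge> 1"
      have np: "real n > 0" using n by simp
      have bnd: "real n * N x / C - K \<le> d (smul (of_nat n * u) x) 0 \<and> d (smul (of_nat n * u) x) 0 \<le> C * (real n * N x) + K"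
        if u: "u \<in> space \<mu>" for u
      proof -
        have "norm u = 1" using u sp by (simp add: unit_sphere_def)
        then have "N (smul (of_nat n * u) x - 0) = real n * N x"
          by (simp add: N_hom[OF LM NN ISO] norm_mult)
        then show ?thesis using K(2)[rule_format, of "smul (of_nat n * u) x" 0] by simp
      qed
      have nn: "0 \<le> d (smul (of_nat n * u) x) 0" for u
        using MS by (simp add: Metric_space.nonneg)
      have int: "integrable \<mu> (\<lambda>u. d (smul (of_nat n * u) x) 0)"
        by (rule P.integrable_const_bound[where B = "C * (real n * N x) + K"])
           (use bnd nn meas in \<open>auto intro!: AE_I2\<close>)
      have lo: "real n * N x / C - K \<le> (\<integral>u. d (smul (of_nat n * u) x) 0 \<partial>\<mu>)"
        by (rule P.integral_ge_const[OF int]) (use bnd in \<open>auto intro!: AE_I2\<close>)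
      have up: "(\<integral>u. d (smul (of_nat n * u) x) 0 \<partial>\<mu>) \<le> C * (real n * N x) + K"
        by (rule P.integral_le_const[OF int]) (use bnd in \<open>auto intro!: AE_I2\<close>)
      have "N x / C - K / n = (real n * N x / C - K) / n" using np by (simp add: field_simps)
      also have "\<dots> \<le> (\<integral>u. d (smul (of_nat n * u) x) 0 \<partial>\<mu>) / real n"
        using lo np by (intro divide_right_mono) auto
      finally show "N x / C - K / n \<le> (\<integral>u. d (smul (of_nat n * u) x) 0 \<partial>\<mu>) / real n" .
      have "(\<integral>u. d (smul (of_nat n * u) x) 0 \<partial>\<mu>) / real n \<le> (C * (real n * N x) + K) / n"
        using up np by (intro divide_right_mono) auto
      also have "\<dots> = C * N x + K / n" using np by (simp add: field_simps)
      finally show "(\<integral>u. d (smul (of_nat n * u) x) 0 \<partial>\<mu>) / real n \<le> C * N x + K / n" .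
    qed
  qed
qed

theorem theorem3:
  fixes smul :: "'k::{real_normed_div_algebra,euclidean_space} \<Rightarrow> 'e::ab_group_add \<Rightarrow> 'e"
    and d :: "'e \<Rightarrow> 'e \<Rightarrow> real"
  assumes "metric_vector_space smul d"
  shows "((\<exists>N. is_norm smul N \<and> asymp_isometric d (\<lambda>x y. N (x - y))) \<longleftrightarrow>
           (asymp_multiplicative smul d \<and>
            (\<forall>V. linear_subspace smul V \<and> V \<noteq> {0} \<longrightarrow> unbounded_on d V) \<and>
            (\<forall>C1>1. \<exists>C0\<ge>0. \<forall>n\<ge>2. \<forall>x y :: nat \<Rightarrow> 'e.
                d (\<Sum>i<n. x i) (\<Sum>i<n. y i) \<le> C1 * (\<Sum>i<n. d (x i) (y i)) + real n * C0)))
         \<and> (\<forall>\<mu>. right_haar_U \<mu> \<longrightarrow>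
              asymp_multiplicative smul d \<longrightarrow>
              (\<forall>V. linear_subspace smul V \<and> V \<noteq> {0} \<longrightarrow> unbounded_on d V) \<longrightarrow>
              (\<forall>C1>1. \<exists>C0\<ge>0. \<forall>n\<ge>2. \<forall>x y :: nat \<Rightarrow> 'e.
                d (\<Sum>i<n. x i) (\<Sum>i<n. y i) \<le> C1 * (\<Sum>i<n. d (x i) (y i)) + real n * C0) \<longrightarrow>
              (\<exists>N. is_norm smul N \<and> asymp_isometric d (\<lambda>x y. N (x - y)) \<and>
                   (\<forall>x. (\<lambda>n. (\<integral>u. d (smul (of_nat n * u) x) 0 \<partial>\<mu>) / real n) \<longlonglongrightarrow> N x)))"
proof -
  have LM: "left_module smul" and MS: "Metric_space UNIV d"
    using assms unfolding metric_vector_space_def by auto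
  show ?thesis
    apply (intro conjI iffI)
    subgoal by (elim exE conjE) (rule fwd_AM[OF LM], assumption+)
    subgoal by (elim exE conjE) (rule fwd_UB[OF LM], assumption+)
    subgoal by (elim exE conjE) (rule fwd_SUB[OF LM], assumption+)
    subgoal by (elim conjE) (rule converse_main[OF LM MS], assumption+)
    subgoal
  proof (intro allI impI)
    fix \<mu> :: "'k measure"
    assume H: "right_haar_U \<mu>" and AM: "asymp_multiplicative smul d"
      and UB: "\<forall>V. linear_subspace smul V \<and> V \<noteq> {0} \<longrightarrow> unbounded_on d V"
      and SUB: "\<forall>C1>1. \<exists>C0\<ge>0. \<forall>n\<ge>2. \<forall>x y :: nat \<Rightarrow> 'e.
                d (\<Sum>i<n. x i) (\<Sum>i<n. y i) \<le> C1 * (\<Sum>i<n. d (x i) (y i)) + real n * C0"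
    obtain N where NN: "is_norm smul N" and ISO: "asymp_isometric d (\<lambda>x y. N (x - y))"
      using converse_main[OF LM MS AM SUB UB] by blast
    show "\<exists>N. is_norm smul N \<and> asymp_isometric d (\<lambda>x y. N (x - y)) \<and>
                   (\<forall>x. (\<lambda>n. (\<integral>u. d (smul (of_nat n * u) x) 0 \<partial>\<mu>) / real n) \<longlonglongrightarrow> N x)"
      using NN ISO haar_lim[OF assms H NN ISO] by blast
  qed
  done
qed

end
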